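(* Let $n\geq 1$ and let $x_1,\dots,x_n\in(0,\tfrac12]$ be not all equal. With $A_n,G_n,A'_n,G'_n$ as in the context, put $r=\frac{\ln(A'_n/G'_n)}{\ln(A_n/G_n)}$. Then $$\frac{A'_n}{G'_n}<\left(\frac{A_n}{G_n}\right)^{\frac{A'_n-G'_n}{A_n-G_n}-r\ln\sqrt{\frac{A'_nG'_n}{A_nG_n}}}<\left(\frac{A_n}{G_n}\right)^{\frac{A'_n-G'_n}{A_n-G_n}-r\ln\frac{A'_n}{A_n}}<\left(\frac{A_n}{G_n}\right)^{1-r\ln\frac{A'_n}{A_n}}<\frac{A_n}{G_n},$$ $$\frac{A'_n}{G'_n}<\max\left\{\left(\frac{A'_n}{G'_n}\right)^{1+\ln\sqrt{\frac{A'_nG'_n}{A_nG_n}}},\left(\frac{A'_n}{G'_n}\right)^{\frac{A_n-G_n}{A'_n-G'_n}}\right\}<\left(\frac{A'_n}{G'_n}\right)^{\left(1+\ln\sqrt{\frac{A'_nG'_n}{A_nG_n}}\right)\frac{A_n-G_n}{A'_n-G'_n}}<\frac{A_n}{G_n},$$ and $$\frac{{A'_n}^n-{G'_n}^n}{{A_n}^n-{G_n}^n}<\frac{{A'_n}^n{G'_n}^n\ln\frac{A'_n}{G'_n}}{{A_n}^n{G_n}^n\ln\frac{A_n}{G_n}}.$$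
   Context: $A_n=\frac1n\sum_{i=1}^n x_i$ and $G_n=\prod_{i=1}^n x_i^{1/n}$ are the arithmetic and geometric means of $x_1,\dots,x_n$; $A'_n=\frac1n\sum_{i=1}^n(1-x_i)$ and $G'_n=\prod_{i=1}^n(1-x_i)^{1/n}$ are the arithmetic and geometric means of $1-x_1,\dots,1-x_n$. *)

theory Defs
  imports "HOL-Analysis.Analysis"
begin

definition AM :: "nat \<Rightarrow> (nat \<Rightarrow> real) \<Rightarrow> real" where
  "AM n x = (\<Sum>i=1..n. x i) / real n"

definition GM :: "nat \<Rightarrow> (nat \<Rightarrow> real) \<Rightarrow> real" where
  "GM n x = (\<Prod>i=1..n. x i powr (1 / real n))"

definition AM' :: "nat \<Rightarrow> (nat \<Rightarrow> real) \<Rightarrow> real" where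
  "AM' n x = (\<Sum>i=1..n. 1 - x i) / real n"

definition GM' :: "nat \<Rightarrow> (nat \<Rightarrow> real) \<Rightarrow> real" where
  "GM' n x = (\<Prod>i=1..n. (1 - x i) powr (1 / real n))"

end

theory Submission
  imports Defs
begin


lemma ln_lt_minus_one: "0 < x \<Longrightarrow> x \<noteq> 1 \<Longrightarrow> ln x < x - 1" for x :: real
  using ln_le_minus_one[of x] ln_eq_minus_one[of x] by fastforce

lemma kyfan_pt:
  fixes a x :: real
  assumes a: "0 < a" "a \<le> 1/2" and x: "0 < x" "x \<le> 1/2" and ne: "x \<noteq> a"
  shows "ln x - ln (1-x) < ln a - ln (1-a) + (x-a)/(a*(1-a))"
proof -
  define \<psi> where "\<psi> y = ln a - ln (1-a) + (y-a)/(a*(1-a)) - ln y + ln (1-y)" for y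
  have der: "DERIV \<psi> y :> 1/(a*(1-a)) - 1/y - 1/(1-y)" if "0 < y" "y < 1" for y
    unfolding \<psi>_def using that a
    apply (auto intro!: derivative_eq_intros)
    done
  have \<psi>a: "\<psi> a = 0" by (simp add: \<psi>_def)
  have key: "1/(a*(1-a)) - 1/y - 1/(1-y) = (y*(1-y) - a*(1-a)) / (a*(1-a)*y*(1-y))"
    if "0<y" "y<1" for y using that a by (simp add: field_simps)
  show ?thesis
  proof (cases "x < a")
    case True
    have "\<psi> x > \<psi> a"
    proof (rule DERIV_neg_imp_decreasing_open[OF True])
      fix y assume y: "x < y" "y < a"
      have "y*(1-y) - a*(1-a) = (y - a)*(1 - y - a)" by algebra
      moreover have "(y - a)*(1 - y - a) < 0" using y a x by (intro mult_neg_pos) auto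
      ultimately have "(y*(1-y) - a*(1-a)) / (a*(1-a)*y*(1-y)) < 0"
        using y a x by (intro divide_neg_pos) auto
      then show "\<exists>d. DERIV \<psi> y :> d \<and> d < 0" using der[of y] key[of y] y a x by auto
    next
      show "continuous_on {x..a} \<psi>"
        by (rule DERIV_atLeastAtMost_imp_continuous_on, rule exI, rule der) (use x a in auto)
    qed
    then show ?thesis using \<psi>a by (simp add: \<psi>_def)
  next
    case False
    then have xa: "a < x" using ne by auto
    have "\<psi> a < \<psi> x"
    proof (rule DERIV_pos_imp_increasing_open[OF xa])
      fix y assume y: "a < y" "y < x"
      have "y*(1-y) - a*(1-a) = (y - a)*(1 - y - a)" by algebra
      moreover have "(y - a)*(1 - y - a) > 0" using y a x by (intro mult_pos_pos) auto
      ultimately have "(y*(1-y) - a*(1-a)) / (a*(1-a)*y*(1-y)) > 0"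
        using y a x by (intro divide_pos_pos) auto
      then show "\<exists>d. DERIV \<psi> y :> d \<and> d > 0" using der[of y] key[of y] y a x by auto
    next
      show "continuous_on {a..x} \<psi>"
        by (rule DERIV_atLeastAtMost_imp_continuous_on, rule exI, rule der) (use x a in auto)
    qed
    then show ?thesis using \<psi>a by (simp add: \<psi>_def)
  qed
qed

lemma alzer_pt:
  fixes S e :: real
  assumes S: "0 \<le> S" "S < 1" and e: "0 \<le> e" "e < 1" and ne: "e \<noteq> S"
  shows "0 < S - e + (1+S)/2 * (ln (1+e) - ln (1+S)) - (1-S)/2 * (ln (1-e) - ln (1-S))"
proof -
  define c1 where "c1 = (1+S)/2"
  define c2 where "c2 = (1-S)/2"
  define K where "K y = S - y + c1 * (ln (1+y) - ln (1+S)) - c2 * (ln (1-y) - ln (1-S))" for y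
  have der: "DERIV K y :> -1 + c1/(1+y) + c2/(1-y)" if "0 \<le> y" "y < 1" for y
  proof -
    have "1 + y \<noteq> 0" "1 - y \<noteq> 0" using that S by auto
    then show ?thesis unfolding K_def using that S
    by (auto intro!: derivative_eq_intros simp: field_simps)
  qed
  have key: "-1 + c1/(1+y) + c2/(1-y) = y*(y-S)/((1+y)*(1-y))"
    if "0\<le>y" "y<1" for y
  proof -
    have nz: "1 + y \<noteq> 0" "1 - y \<noteq> 0" using that by auto
    have "-1 + c1/(1+y) + c2/(1-y)
        = (-1*((1+y)*(1-y)) + c1*(1-y) + c2*(1+y)) / ((1+y)*(1-y))"
      using nz by (simp add: field_simps)
    also have "-1*((1+y)*(1-y)) + c1*(1-y) + c2*(1+y) = y*(y-S)"
      unfolding c1_def c2_def by (simp add: field_simps)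
    finally show ?thesis .
  qed
  have Ks: "K S = 0" by (simp add: K_def)
  show ?thesis
  proof (cases "e < S")
    case True
    have "K e > K S"
    proof (rule DERIV_neg_imp_decreasing_open[OF True])
      fix y assume y: "e < y" "y < S"
      have "y*(y-S)/((1+y)*(1-y)) < 0" using y S e
        by (intro divide_neg_pos mult_pos_neg mult_pos_pos) auto
      then show "\<exists>d. DERIV K y :> d \<and> d < 0" using der[of y] key[of y] y S e by auto
    next
      show "continuous_on {e..S} K"
        by (rule DERIV_atLeastAtMost_imp_continuous_on, rule exI, rule der) (use S e in auto)
    qed
    then show ?thesis using Ks by (simp add: K_def c1_def c2_def)
  next
    case False
    then have xa: "S < e" using ne by auto
    have "K S < K e"
    proof (rule DERIV_pos_imp_increasing_open[OF xa])
      fix y assume y: "S < y" "y < e"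
      have "y*(y-S)/((1+y)*(1-y)) > 0" using y S e
        by (intro divide_pos_pos mult_pos_pos) auto
      then show "\<exists>d. DERIV K y :> d \<and> d > 0" using der[of y] key[of y] y S e by auto
    next
      show "continuous_on {S..e} K"
        by (rule DERIV_atLeastAtMost_imp_continuous_on, rule exI, rule der) (use S e in auto)
    qed
    then show ?thesis using Ks by (simp add: K_def c1_def c2_def)
  qed
qed

lemma phi_pt:
  fixes u v :: real
  assumes v: "0 < v" "v < u" and u: "u \<le> 1"
  shows "(u-v)*(1 - ln u/2 - ln v/2) < ln u - ln v"
proof -
  define \<phi> where "\<phi> y = ln u - ln y - (u-y)*(1 - ln u/2 - ln y/2)" for y
  have der: "DERIV \<phi> y :> - (1/y) - ((-1)*(1 - ln u/2 - ln y/2) + (u-y)*(-(1/y)/2))" if "0 < y" for y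
    unfolding \<phi>_def using that
    by (auto intro!: derivative_eq_intros)
  have neg: "- (1/y) - ((-1)*(1 - ln u/2 - ln y/2) + (u-y)*(-(1/y)/2)) < 0" if y: "v < y" "y < u" for y
  proof -
    have y0: "0 < y" using y v by auto
    have lu: "ln u \<le> 0" using u v by simp
    have "ln (u/y) < u/y - 1" using y y0 by (intro ln_lt_minus_one) auto  
    then have "ln u - ln y < u/y - 1" using y0 v y by (simp add: ln_div)
    then have "y*(ln u - ln y) < y*(u/y - 1)" using y0 by (intro mult_strict_left_mono) auto
    moreover have "y*(u/y - 1) = u - y" using y0 by (simp add: field_simps)
    moreover have "y*(ln u - ln y) = y*ln u - y*ln y" by (simp add: algebra_simps)
    ultimately have a1: "- y * ln y < - y * ln u + u - y" by linarith
    have a2: "- y * ln u \<le> - u * ln u" using lu y by (intro mult_right_mono_neg) auto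
    have "ln (1/u) \<le> 1/u - 1" using v by (intro ln_le_minus_one) auto
    then have "- ln u \<le> 1/u - 1" using v by (simp add: ln_div)
    then have "u * (- ln u) \<le> u*(1/u - 1)" using v by (intro mult_left_mono) auto
    moreover have "u*(1/u - 1) = 1 - u" using v by (simp add: field_simps)
    ultimately have a3: "- u * ln u \<le> 1 - u" by simp
    have "y*(1 - ln u - ln y) + u - 2 < 0" using a1 a2 a3 by (simp add: algebra_simps)
    moreover have "- (1/y) - ((-1)*(1 - ln u/2 - ln y/2) + (u-y)*(-(1/y)/2)) = (y*(1 - ln u - ln y) + u - 2)/(2*y)"
      using y0 by (simp add: field_simps)
    ultimately show ?thesis using y0 by (simp add: divide_neg_pos)
  qed
  have "\<phi> v > \<phi> u"
  proof (rule DERIV_neg_imp_decreasing_open[OF v(2)])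
    fix y assume y: "v < y" "y < u"
    then show "\<exists>d. DERIV \<phi> y :> d \<and> d < 0" using der[of y] neg[of y] v by auto
  next
    show "continuous_on {v..u} \<phi>"
      by (rule DERIV_atLeastAtMost_imp_continuous_on, rule exI, rule der) (use v in auto)
  qed
  then show ?thesis by (simp add: \<phi>_def)
qed

lemma lnsqrt_pt:
  fixes w :: real
  assumes "1 \<le> w"
  shows "ln w \<le> (w-1)/sqrt w"
proof -
  define z where "z = sqrt w"
  have z1: "1 \<le> z" using assms by (simp add: z_def)
  have wz: "w = z*z" using assms by (simp add: z_def)
  define h :: "real \<Rightarrow> real" where "h y = y - 1/y - 2 * ln y" for y
  have "h 1 \<le> h z"
  proof (rule DERIV_nonneg_imp_nondecreasing[OF z1])
    fix y assume y: "1 \<le> y" "y \<le> z"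
    have "DERIV h y :> 1 - (-1/(y*y)) - 2*(1/y)" unfolding h_def using y
      by (auto intro!: derivative_eq_intros simp: power2_eq_square)
    moreover have "1 - (-1/(y*y)) - 2*(1/y) = (1 - 1/y)^2" using y by (simp add: field_simps power2_eq_square)
    ultimately show "\<exists>d. DERIV h y :> d \<and> d \<ge> 0" by auto
  qed
  then have "2 * ln z \<le> z - 1/z" by (simp add: h_def)
  moreover have "ln w = 2 * ln z" using z1 wz by (simp add: ln_mult)
  moreover have "(w-1)/sqrt w = z - 1/z" using z1 wz by (simp add: z_def[symmetric] field_simps)
  ultimately show ?thesis by simp
qed

lemma lmono_pt:
  fixes w1 w2 :: real
  assumes "1 < w1" "w1 \<le> w2"
  shows "(w1-1) * ln w2 \<le> (w2-1) * ln w1"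
proof -
  define h where "h w = (w1-1) * ln w - (w-1) * ln w1" for w
  have "h w1 \<ge> h w2"
  proof (rule DERIV_nonpos_imp_nonincreasing[OF assms(2)])
    fix y assume y: "w1 \<le> y" "y \<le> w2"
    have "DERIV h y :> (w1-1)*(1/y) - ln w1" unfolding h_def using y assms
      by (auto intro!: derivative_eq_intros)
    moreover have "(w1-1)*(1/y) - ln w1 \<le> 0"
    proof -
      have "(w1-1)*(1/y) \<le> (w1-1)*(1/w1)" using y assms by (intro mult_left_mono) (auto simp: field_simps)
      moreover have "ln (1/w1) \<le> 1/w1 - 1" using assms by (intro ln_le_minus_one) auto
      then have "1 - 1/w1 \<le> ln w1" using assms by (simp add: ln_div)
      moreover have "(w1-1)*(1/w1) = 1 - 1/w1" using assms by (simp add: field_simps)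
      ultimately show ?thesis by linarith
    qed
    ultimately show "\<exists>d. DERIV h y :> d \<and> d \<le> 0" by auto
  qed
  then show ?thesis by (simp add: h_def)
qed



lemma final_real:
  fixes A G A' G' :: real and n :: nat
  assumes G0: "0 < G" and GA: "G < A" and A2: "A < 1/2" and A'd: "A' = 1 - A"
    and G'2: "1/2 \<le> G'" and G'A': "G' < A'"
    and KF: "ln A' - ln A < ln G' - ln G" and AL: "A' - G' < A - G" and n1: "n \<ge> 1"
  shows
   "let A = A; G = G; A' = A'; G' = G';
        r = ln (A' / G') / ln (A / G);
        L = ln (sqrt ((A' * G') / (A * G)))
    in A' / G' < (A / G) powr ((A' - G') / (A - G) - r * L)
     \<and> (A / G) powr ((A' - G') / (A - G) - r * L)
         < (A / G) powr ((A' - G') / (A - G) - r * ln (A' / A))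
     \<and> (A / G) powr ((A' - G') / (A - G) - r * ln (A' / A))
         < (A / G) powr (1 - r * ln (A' / A))
     \<and> (A / G) powr (1 - r * ln (A' / A)) < A / G
     \<and> A' / G' < max ((A' / G') powr (1 + L)) ((A' / G') powr ((A - G) / (A' - G')))
     \<and> max ((A' / G') powr (1 + L)) ((A' / G') powr ((A - G) / (A' - G')))
         < (A' / G') powr ((1 + L) * ((A - G) / (A' - G')))
     \<and> (A' / G') powr ((1 + L) * ((A - G) / (A' - G'))) < A / G
     \<and> (A' ^ n - G' ^ n) / (A ^ n - G ^ n)
         < (A' ^ n * G' ^ n * ln (A' / G')) / (A ^ n * G ^ n * ln (A / G))"
proof -
  have A0: "0 < A" using G0 GA by linarith
  have A'0: "0 < A'" "1/2 < A'" using A'd A2 by auto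
  have G'0: "0 < G'" using G'2 by linarith
  have AA': "A < A'" using A2 A'd by linarith
  have GG': "G < G'" using GA A2 G'2 by linarith
  define \<alpha> where "\<alpha> = ln (A/G)"
  define \<beta> where "\<beta> = ln (A'/G')"
  define r where "r = ln (A' / G') / ln (A / G)"
  define L where "L = ln (sqrt ((A' * G') / (A * G)))"
  define M where "M = ln (A'/A)"
  define q where "q = (A' - G') / (A - G)"
  have \<alpha>eq: "\<alpha> = ln A - ln G" using A0 G0 by (simp add: \<alpha>_def ln_div)
  have \<beta>eq: "\<beta> = ln A' - ln G'" using A'0 G'0 by (simp add: \<beta>_def ln_div)
  have Meq: "M = ln A' - ln A" using A'0 A0 by (simp add: M_def ln_div)
  have Leq: "L = (ln A' + ln G' - ln A - ln G)/2"
    using A'0 G'0 A0 G0 by (simp add: L_def ln_sqrt ln_div ln_mult)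
  have \<alpha>0: "0 < \<alpha>" using \<alpha>eq GA G0 by simp
  have \<beta>0: "0 < \<beta>" using \<beta>eq G'A' G'0 by simp
  have \<beta>\<alpha>: "\<beta> < \<alpha>" using \<alpha>eq \<beta>eq KF by linarith
  have M0: "0 < M" using Meq AA' A0 by simp
  have MltL: "M < L" unfolding Meq Leq using KF by (simp add: field_simps)
  have L0: "0 < L" using M0 MltL by linarith
  have r_eq: "r = \<beta>/\<alpha>" by (simp add: r_def \<alpha>_def \<beta>_def)
  have r0: "0 < r" using r_eq \<alpha>0 \<beta>0 by simp
  have q0: "0 < q" using q_def G'A' GA by simp
  have q1: "q < 1" using q_def AL GA by simp
  define s where "s = sqrt (A'*G')"
  define t where "t = sqrt (A*G)"
  have s0: "0 < s" using A'0 G'0 by (simp add: s_def)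
  have s2: "1/2 \<le> s"
  proof -
    have "(1/2)*(1/2) \<le> A'*G'" using A'0 G'2 by (intro mult_mono) auto
    then have "(1/2)^2 \<le> A'*G'" by (simp add: power2_eq_square)
    then show ?thesis unfolding s_def by (rule real_le_rsqrt)
  qed
  have lns: "ln s = (ln A' + ln G')/2" using A'0 G'0 by (simp add: s_def ln_sqrt ln_mult)
  have lnt: "ln t = (ln A + ln G)/2" using A0 G0 by (simp add: t_def ln_sqrt ln_mult)
  have Lst: "L = ln s - ln t" using Leq lns lnt by (simp add: field_simps)
  have hb: "\<beta> \<le> (A'-G')/s"
  proof -
    have "ln (A'/G') \<le> (A'/G' - 1)/sqrt (A'/G')" using G'A' G'0 by (intro lnsqrt_pt) simp
    moreover have "sqrt (A'/G') = s/G'"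
    proof (rule real_sqrt_unique)
      show "(s/G')^2 = A'/G'" using A'0 G'0 by (simp add: s_def power_divide power2_eq_square)
      show "0 \<le> s/G'" using s0 G'0 by simp
    qed
    moreover have "(A'/G' - 1)/(s/G') = (A'-G')/s" using G'0 s0 by (simp add: field_simps)
    ultimately show ?thesis unfolding \<beta>_def by metis
  qed
  have P1: "2*(A-G)*(1 - ln 2 - ln t) < \<alpha>"
  proof -
    have "(2*A - 2*G)*(1 - ln (2*A)/2 - ln (2*G)/2) < ln (2*A) - ln (2*G)"
      using G0 GA A2 by (intro phi_pt) auto
    moreover have "ln (2*A) = ln 2 + ln A" "ln (2*G) = ln 2 + ln G" using A0 G0 by (simp_all add: ln_mult)
    ultimately show ?thesis using \<alpha>eq lnt by (simp add: algebra_simps)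
  qed
  have AGa: "A - G \<le> A*\<alpha>"
  proof -
    have "ln (G/A) \<le> G/A - 1" using G0 A0 by (intro ln_le_minus_one) simp
    then have "-\<alpha> \<le> G/A - 1" using \<alpha>eq G0 A0 by (simp add: ln_div)
    then have "A*(-\<alpha>) \<le> A*(G/A - 1)" using A0 by (intro mult_left_mono) auto
    moreover have "A*(G/A - 1) = G - A" using A0 by (simp add: field_simps)
    ultimately show ?thesis by simp
  qed
  have AGa2: "A - G \<le> \<alpha>/2"
  proof -
    have "A*\<alpha> \<le> (1/2)*\<alpha>" using A2 \<alpha>0 by (intro mult_right_mono) auto
    then show ?thesis using AGa by simp
  qed
  have P2: "(A-G)*(ln 2 + ln s) \<le> (A-G)*(2 * s-1)"
  proof -
    have "ln (2 * s) \<le> 2 * s - 1" using s0 by (intro ln_le_minus_one) simp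
    then have "ln 2 + ln s \<le> 2 * s - 1" using s0 by (simp add: ln_mult)
    then show ?thesis using GA by (intro mult_left_mono) auto
  qed
  have P3: "(A-G)*(2 * s-1) \<le> \<alpha>/2*(2 * s-1)" using AGa2 s2 by (intro mult_right_mono) auto
  have T1: "(A-G)*(1+L) < \<alpha> * s"
  proof -
    have "(A-G)*(1+L) = (A-G)*(1 - ln 2 - ln t) + (A-G)*(ln 2 + ln s)" unfolding Lst by (simp add: algebra_simps)
    moreover have "\<alpha> * s = \<alpha>/2 + \<alpha>/2*(2 * s-1)" by (simp add: algebra_simps)
    moreover have "2*(A-G)*(1 - ln 2 - ln t) = 2*((A-G)*(1 - ln 2 - ln t))" by simp
    ultimately show ?thesis using P1 P2 P3 by linarith
  qed
  have E1: "\<beta>*(1+L) < \<alpha>*q"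
  proof -
    have "\<beta>*(1+L) \<le> (A'-G')/s*(1+L)" using hb L0 by (intro mult_right_mono) auto
    moreover have "\<alpha>*q - (A'-G')/s*(1+L) = (A'-G')/(s * (A-G)) * (\<alpha> * s - (A-G)*(1+L))"
      using s0 GA by (simp add: q_def field_simps)
    moreover have "(A'-G')/(s * (A-G)) * (\<alpha> * s - (A-G)*(1+L)) > 0"
      using T1 s0 GA G'A' by (intro mult_pos_pos divide_pos_pos) auto
    ultimately show ?thesis by linarith
  qed
  define q' where "q' = (A - G) / (A' - G')"
  have q'q: "q' = 1/q" by (simp add: q'_def q_def)
  have q'1: "1 < q'" using q'q q0 q1 by simp
  have pa: "(A/G) powr z = exp (z*\<alpha>)" for z using A0 G0 by (simp add: powr_def \<alpha>_def)
  have pb: "(A'/G') powr z = exp (z*\<beta>)" for z using A'0 G'0 by (simp add: powr_def \<beta>_def)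
  have ea: "A/G = exp \<alpha>" using A0 G0 by (simp add: \<alpha>_def)
  have eb: "A'/G' = exp \<beta>" using A'0 G'0 by (simp add: \<beta>_def)
  have r\<alpha>: "r*\<alpha> = \<beta>" using r_eq \<alpha>0 by simp
  have c1: "A' / G' < (A / G) powr (q - r * L)"
  proof -
    have "(q - r*L)*\<alpha> = \<alpha>*q - (r*\<alpha>)*L" by (simp add: algebra_simps)
    then have e: "(q - r*L)*\<alpha> = \<alpha>*q - \<beta>*L" unfolding r\<alpha> .
    have "\<beta>*(1+L) = \<beta> + \<beta>*L" by (simp add: algebra_simps)
    then have "\<beta> < (q - r*L)*\<alpha>" using E1 e by linarith
    then show ?thesis unfolding pa eb by simp
  qed
  have c2: "(A / G) powr (q - r * L) < (A / G) powr (q - r * M)"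
  proof -
    have "r*M < r*L" using r0 MltL by simp
    then have "(q - r*L)*\<alpha> < (q - r*M)*\<alpha>" using \<alpha>0 by (intro mult_strict_right_mono) auto
    then show ?thesis unfolding pa by simp
  qed
  have c3: "(A / G) powr (q - r * M) < (A / G) powr (1 - r * M)"
  proof -
    have "(q - r*M)*\<alpha> < (1 - r*M)*\<alpha>" using \<alpha>0 q1 by (intro mult_strict_right_mono) auto
    then show ?thesis unfolding pa by simp
  qed
  have c4: "(A / G) powr (1 - r * M) < A / G"
  proof -
    have "0 < r*M" using r0 M0 by simp
    then have "0 < (r*M)*\<alpha>" using \<alpha>0 by simp
    moreover have "(1 - r*M)*\<alpha> = \<alpha> - (r*M)*\<alpha>" by (simp add: algebra_simps)
    ultimately have "(1 - r*M)*\<alpha> < \<alpha>" by linarith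
    then show ?thesis using pa[of "1 - r*M"] ea by simp
  qed
  have c5: "A' / G' < max ((A' / G') powr (1 + L)) ((A' / G') powr q')"
  proof -
    have "\<beta> < (1+L)*\<beta>" using \<beta>0 L0 by (simp add: algebra_simps)
    then have "A'/G' < (A' / G') powr (1 + L)" using pb[of "1+L"] eb by simp
    then show ?thesis by (simp add: less_max_iff_disj)
  qed
  have c6: "max ((A' / G') powr (1 + L)) ((A' / G') powr q') < (A' / G') powr ((1 + L) * q')"
  proof -
    have "(1+L)*\<beta> < ((1+L)*q')*\<beta>"
    proof -
      have "(1+L)*\<beta>*1 < (1+L)*\<beta>*q'" using q'1 \<beta>0 L0 by (intro mult_strict_left_mono) auto
      then show ?thesis by (simp add: algebra_simps)
    qed
    moreover have "q'*\<beta> < ((1+L)*q')*\<beta>"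
    proof -
      have "1*(q'*\<beta>) < (1+L)*(q'*\<beta>)" using q'1 \<beta>0 L0 by (intro mult_strict_right_mono) auto
      then show ?thesis by (simp add: algebra_simps)
    qed
    ultimately show ?thesis unfolding pb by simp
  qed
  have c7: "(A' / G') powr ((1 + L) * q') < A / G"
  proof -
    have "((1+L)*q')*\<beta> = (\<beta>*(1+L))/q" using q'q by simp
    also have "\<dots> < (\<alpha>*q)/q" using E1 q0 by (intro divide_strict_right_mono) auto
    also have "\<dots> = \<alpha>" using q0 by simp
    finally show ?thesis unfolding pb ea by simp
  qed
  have c8: "(A' ^ n - G' ^ n) / (A ^ n - G ^ n)
         < (A' ^ n * G' ^ n * ln (A' / G')) / (A ^ n * G ^ n * ln (A / G))"
  proof -
    define P where "P = A^n"
    define Q where "Q = G^n"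
    define P' where "P' = A'^n"
    define Q' where "Q' = G'^n"
    define w where "w = (A/G)^n"
    define w' where "w' = (A'/G')^n"
    define N where "N = real n"
    have N0: "0 < N" using n1 by (simp add: N_def)
    have Ppos: "0 < P" "0 < Q" "0 < P'" "0 < Q'" using A0 G0 A'0 G'0 by (simp_all add: P_def Q_def P'_def Q'_def)
    have PP': "P < P'" unfolding P_def P'_def using AA' A0 n1 by (intro power_strict_mono) auto
    have ba: "A'/G' < A/G" using \<beta>\<alpha> unfolding ea eb by simp
    have b1: "1 < A'/G'" using G'A' G'0 by simp
    have w'1: "1 < w'" unfolding w'_def using b1 n1 by (simp add: one_less_power)
    have ww': "w' < w" unfolding w_def w'_def using ba b1 n1 by (intro power_strict_mono) auto
    have lw: "ln w = N*\<alpha>" using A0 G0 by (simp add: w_def N_def \<alpha>_def ln_realpow)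
    have lw': "ln w' = N*\<beta>" using A'0 G'0 by (simp add: w'_def N_def \<beta>_def ln_realpow)
    have "(w'-1) * ln w \<le> (w-1) * ln w'" using w'1 ww' by (intro lmono_pt) auto
    then have "N*((w'-1)*\<alpha>) \<le> N*((w-1)*\<beta>)" unfolding lw lw' by (simp add: algebra_simps)
    then have key: "(w'-1)*\<alpha> \<le> (w-1)*\<beta>" using N0 by simp
    have wP: "w = P/Q" "w' = P'/Q'" by (simp_all add: w_def w'_def P_def Q_def P'_def Q'_def power_divide)
    have k2: "(w'-1)*\<alpha>*P < (w-1)*\<beta>*P'"
    proof -
      have "0 < (w'-1)*\<alpha>" using w'1 \<alpha>0 by simp
      then have "(w'-1)*\<alpha>*P < (w'-1)*\<alpha>*P'" using PP' by (intro mult_strict_left_mono)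
      also have "\<dots> \<le> (w-1)*\<beta>*P'" using key Ppos by (intro mult_right_mono) auto
      finally show ?thesis .
    qed
    have d1: "0 < P - Q"
    proof -
      have "Q*1 < Q*w" using ww' w'1 Ppos by (intro mult_strict_left_mono) auto
      moreover have "Q*w = P" using wP Ppos by simp
      ultimately show ?thesis by simp
    qed
    have d2: "0 < P*Q*\<alpha>" using Ppos \<alpha>0 by simp
    have "(P' - Q')*(P*Q*\<alpha>) = Q*Q'*((w'-1)*\<alpha>*P)" using Ppos wP by (simp add: field_simps)
    also have "\<dots> < Q*Q'*((w-1)*\<beta>*P')" using k2 Ppos by simp
    also have "\<dots> = (P'*Q'*\<beta>)*(P-Q)" using Ppos wP by (simp add: field_simps)
    finally have "(P' - Q')*(P*Q*\<alpha>) < (P'*Q'*\<beta>)*(P-Q)" .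
    then have "(P' - Q')/(P-Q) < (P'*Q'*\<beta>)/(P*Q*\<alpha>)" using d1 d2 by (simp add: frac_less_eq field_simps)
    then show ?thesis by (simp add: P_def Q_def P'_def Q'_def \<alpha>_def \<beta>_def)
  qed
  show ?thesis unfolding Let_def
    using c1 c2 c3 c4 c5 c6 c7 c8 unfolding r_def L_def M_def q_def q'_def \<alpha>_def \<beta>_def
    by blast
qed



lemma sum_lin:
  fixes f g h :: "nat \<Rightarrow> real"
  assumes "finite I"
  shows "(\<Sum>i\<in>I. a + b * f i + c * g i + d * h i) = real (card I) * a + b * sum f I + c * sum g I + d * sum h I"
  by (simp add: sum.distrib sum_distrib_left)

lemma gm_exp:
  fixes y :: "nat \<Rightarrow> real"
  assumes "\<And>i. i \<in> {1..n} \<Longrightarrow> 0 < y i"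
  shows "(\<Prod>i=1..n. y i powr (1 / real n)) = exp ((\<Sum>i=1..n. ln (y i)) / real n)"
proof -
  have "(\<Prod>i=1..n. y i powr (1 / real n)) = (\<Prod>i=1..n. exp (ln (y i) / real n))"
  proof (rule prod.cong)
    fix i assume "i \<in> {1..n}"
    then have "0 < y i" by (rule assms)
    then show "y i powr (1 / real n) = exp (ln (y i) / real n)" by (simp add: powr_def)
  qed simp
  also have "\<dots> = exp (\<Sum>i=1..n. ln (y i) / real n)" by (simp add: exp_sum)
  also have "(\<Sum>i=1..n. ln (y i) / real n) = (\<Sum>i=1..n. ln (y i)) / real n"
    by (simp add: sum_divide_distrib)
  finally show ?thesis .
qed

lemma amgm_strict:
  fixes y :: "nat \<Rightarrow> real"
  assumes n1: "n \<ge> 1" and pos: "\<And>i. i \<in> {1..n} \<Longrightarrow> 0 < y i"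
    and ne: "\<exists>k\<in>{1..n}. y k \<noteq> (\<Sum>i=1..n. y i) / real n"
  shows "(\<Sum>i=1..n. ln (y i)) < real n * ln ((\<Sum>i=1..n. y i) / real n)"
proof -
  define m where "m = (\<Sum>i=1..n. y i) / real n"
  have N0: "0 < real n" using n1 by simp
  have S0: "0 < (\<Sum>i=1..n. y i)" using pos n1 by (intro sum_pos) auto
  then have m0: "0 < m" using N0 by (simp add: m_def)
  have pt: "ln (y i) \<le> (ln m - 1) + (1/m) * y i + 0 * 0 + 0 * 0" if "i \<in> {1..n}" for i
  proof -
    have "ln (y i / m) \<le> y i / m - 1" using pos[OF that] m0 by (intro ln_le_minus_one) simp
    then show ?thesis using pos[OF that] m0 by (simp add: ln_div)
  qed
  have pts: "ln (y i) < (ln m - 1) + (1/m) * y i + 0 * 0 + 0 * 0" if "i \<in> {1..n}" "y i \<noteq> m" for i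
  proof -
    have "ln (y i / m) < y i / m - 1" using pos[OF that(1)] m0 that(2) by (intro ln_lt_minus_one) auto
    then show ?thesis using pos[OF that(1)] m0 by (simp add: ln_div)
  qed
  have "(\<Sum>i=1..n. ln (y i)) < (\<Sum>i=1..n. (ln m - 1) + (1/m) * y i + 0 * (\<lambda>_. 0::real) i + 0 * (\<lambda>_. 0::real) i)"
  proof (rule sum_strict_mono_ex1)
    show "\<forall>i\<in>{1..n}. ln (y i) \<le> (ln m - 1) + (1/m) * y i + 0 * (\<lambda>_. 0::real) i + 0 * (\<lambda>_. 0::real) i"
      using pt by simp
    from ne obtain k where k: "k \<in> {1..n}" "y k \<noteq> m" by (auto simp: m_def)
    show "\<exists>i\<in>{1..n}. ln (y i) < (ln m - 1) + (1/m) * y i + 0 * (\<lambda>_. 0::real) i + 0 * (\<lambda>_. 0::real) i"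
      using pts[OF k] k by auto
  qed simp
  also have "\<dots> = real n * (ln m - 1) + (1/m) * (\<Sum>i=1..n. y i)"
    by (subst sum_lin) auto
  also have "(1/m) * (\<Sum>i=1..n. y i) = real n" using S0 N0 by (simp add: m_def)
  finally show ?thesis by (simp add: m_def algebra_simps)
qed

lemma core:
  fixes n :: nat and x :: "nat \<Rightarrow> real"
  assumes n1: "n \<ge> 1"
    and hx: "\<And>i. i \<in> {1..n} \<Longrightarrow> 0 < x i \<and> x i \<le> 1/2"
    and ne: "\<exists>i\<in>{1..n}. \<exists>j\<in>{1..n}. x i \<noteq> x j"
  shows "0 < GM n x \<and> GM n x < AM n x \<and> AM n x < 1/2 \<and> AM' n x = 1 - AM n x \<and> 1/2 \<le> GM' n x
     \<and> GM' n x < AM' n x \<and> ln (AM' n x) - ln (AM n x) < ln (GM' n x) - ln (GM n x)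
     \<and> AM' n x - GM' n x < AM n x - GM n x"
proof -
  define I where "I = {1..n}"
  have fin: "finite I" and cI: "card I = n" by (simp_all add: I_def)
  define N where "N = real n"
  have N0: "0 < N" using n1 by (simp add: N_def)
  have x0: "\<And>i. i \<in> I \<Longrightarrow> 0 < x i" and x2: "\<And>i. i \<in> I \<Longrightarrow> x i \<le> 1/2" using hx by (auto simp: I_def)
  have notall: "\<exists>k\<in>I. x k \<noteq> c" for c using ne unfolding I_def by metis
  define SX where "SX = (\<Sum>i\<in>I. x i)"
  define SL where "SL = (\<Sum>i\<in>I. ln (x i))"
  define SL' where "SL' = (\<Sum>i\<in>I. ln (1 - x i))"
  define A where "A = AM n x"
  define A' where "A' = AM' n x"
  define G where "G = GM n x"
  define G' where "G' = GM' n x"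
  have Adef: "A = SX / N" by (simp add: A_def AM_def SX_def N_def I_def)
  have A'def: "A' = 1 - A"
  proof -
    have "(\<Sum>i\<in>I. 1 - x i) = N - SX" by (simp add: sum_subtractf SX_def N_def cI)
    moreover have "A' = (\<Sum>i\<in>I. 1 - x i) / N" by (simp add: A'_def AM'_def I_def N_def)
    ultimately show ?thesis using N0 by (simp add: Adef field_simps)
  qed
  have Gdef: "G = exp (SL / N)" unfolding G_def GM_def SL_def N_def I_def
    by (rule gm_exp, drule hx, linarith)
  have G'def: "G' = exp (SL' / N)" unfolding G'_def GM'_def SL'_def N_def I_def
    by (rule gm_exp, drule hx, linarith)
  have G0: "0 < G" "0 < G'" by (simp_all add: Gdef G'def)
  have lnG: "ln G = SL / N" "ln G' = SL' / N" by (simp_all add: Gdef G'def)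
  have A2: "A < 1/2"
  proof -
    obtain k where k: "k \<in> I" "x k \<noteq> 1/2" using notall by blast
    have "SX < (\<Sum>i\<in>I. 1/2)"
      unfolding SX_def by (rule sum_strict_mono_ex1) (use fin x2 k in \<open>auto intro!: bexI[of _ k] simp: order.not_eq_order_implies_strict\<close>)
    then have "SX < N/2" by (simp add: cI N_def)
    then show ?thesis using N0 by (simp add: Adef field_simps)
  qed
  have A0: "0 < A"
  proof -
    have "0 < SX" unfolding SX_def using x0 fin n1 by (intro sum_pos) (auto simp: I_def)
    then show ?thesis using N0 by (simp add: Adef)
  qed
  have G'2: "1/2 \<le> G'"
  proof -
    have "(\<Sum>i\<in>I. ln (1/2)) \<le> SL'" unfolding SL'_def
    proof (rule sum_mono)
      fix i assume "i \<in> I"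
      then have "x i \<le> 1/2" by (rule x2)
      then show "ln (1/2) \<le> ln (1 - x i)" by (subst ln_le_cancel_iff) auto
    qed
    then have "N * ln (1/2) \<le> SL'" by (simp add: cI N_def)
    then have "ln (1/2) \<le> SL' / N" using N0 by (simp add: field_simps)
    then have "exp (ln (1/2)) \<le> exp (SL'/N)" by (simp only: exp_le_cancel_iff)
    moreover have "exp (ln (1/2::real)) = 1/2" by simp
    ultimately show ?thesis by (simp only: G'def)
  qed
  have GA: "G < A"
  proof -
    have "(\<Sum>i=1..n. ln (x i)) < real n * ln ((\<Sum>i=1..n. x i) / real n)"
      by (rule amgm_strict) (use n1 hx notall in \<open>auto simp: I_def\<close>)
    then have "SL < N * ln A" by (simp add: SL_def SX_def Adef I_def N_def)
    then have "SL / N < ln A" using N0 by (simp add: field_simps)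
    then have "exp (SL/N) < exp (ln A)" by simp
    then show ?thesis using A0 by (simp add: Gdef)
  qed
  have G'A': "G' < A'"
  proof -
    have "(\<Sum>i=1..n. ln (1 - x i)) < real n * ln ((\<Sum>i=1..n. 1 - x i) / real n)"
    proof (rule amgm_strict)
      show "\<And>i. i \<in> {1..n} \<Longrightarrow> 0 < 1 - x i" using hx by fastforce
      obtain k where k: "k \<in> I" "x k \<noteq> 1 - (\<Sum>i=1..n. 1 - x i) / real n" using notall by blast
      then have "1 - x k \<noteq> (\<Sum>i=1..n. 1 - x i) / real n" by linarith
      then show "\<exists>k\<in>{1..n}. 1 - x k \<noteq> (\<Sum>i=1..n. 1 - x i) / real n" using k(1) by (auto simp: I_def)
    qed (use n1 in auto)
    then have "SL' < N * ln A'" by (simp add: SL'_def A'_def AM'_def I_def N_def)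
    then have "SL' / N < ln A'" using N0 by (simp add: field_simps)
    then have "exp (SL'/N) < exp (ln A')" by simp
    then show ?thesis using A0 A2 A'def by (simp add: G'def)
  qed
  have SXA: "SX = N * A" using N0 by (simp add: Adef)
  have SLG: "SL = N * ln G" "SL' = N * ln G'" using N0 by (simp_all add: lnG)
  have KF: "ln A' - ln A < ln G' - ln G"
  proof -
    define b where "b = 1/(A*(1-A))"
    have nzA: "A*(1-A) \<noteq> 0" "A - A*A \<noteq> 0" using A0 A2 by (simp_all add: algebra_simps)
    define a0 where "a0 = ln A - ln (1-A) - A*b"
    have pt: "ln (x i) - ln (1 - x i) \<le> a0 + b * x i + 0 * (\<lambda>_. 0::real) i + 0 * (\<lambda>_. 0::real) i"
      if "i \<in> I" for i
    proof (cases "x i = A")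
      case True then show ?thesis by (simp add: a0_def b_def algebra_simps)
    next
      case False
      have "ln (x i) - ln (1 - x i) < ln A - ln (1-A) + (x i - A)/(A*(1-A))"
        using kyfan_pt[of A "x i"] A0 A2 x0[OF that] x2[OF that] False by auto
      moreover have "(x i - A)/(A*(1-A)) = b * x i - A*b" by (simp add: b_def diff_divide_distrib)
      ultimately show ?thesis by (simp add: a0_def)
    qed
    obtain k where k: "k \<in> I" "x k \<noteq> A" using notall by blast
    have ptk: "ln (x k) - ln (1 - x k) < a0 + b * x k + 0 * (\<lambda>_. 0::real) k + 0 * (\<lambda>_. 0::real) k"
    proof -
      have "ln (x k) - ln (1 - x k) < ln A - ln (1-A) + (x k - A)/(A*(1-A))"
        using kyfan_pt[of A "x k"] A0 A2 x0[OF k(1)] x2[OF k(1)] k(2) by auto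
      moreover have "(x k - A)/(A*(1-A)) = b * x k - A*b" by (simp add: b_def diff_divide_distrib)
      ultimately show ?thesis by (simp add: a0_def)
    qed
    have "(\<Sum>i\<in>I. ln (x i) - ln (1 - x i)) < (\<Sum>i\<in>I. a0 + b * x i + 0 * (\<lambda>_. 0::real) i + 0 * (\<lambda>_. 0::real) i)"
      by (rule sum_strict_mono_ex1) (use fin pt ptk k in auto)
    also have "\<dots> = N * a0 + b * SX" by (subst sum_lin[OF fin]) (simp add: cI N_def SX_def)
    also have "\<dots> = N * (ln A - ln A')" using A0 A2 A'def
      by (simp add: SXA a0_def algebra_simps)
    finally have "SL - SL' < N * (ln A - ln A')" by (simp add: SL_def SL'_def sum_subtractf)
    then have "N * (ln G - ln G') < N * (ln A - ln A')" using SLG by (simp add: algebra_simps)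
    then show ?thesis using N0 by simp
  qed
  have AL: "A' - G' < A - G"
  proof -
    define T where "T = G + G'"
    define S where "S = (G' - G) / T"
    have T0: "0 < T" using G0 by (simp add: T_def)
    have GG': "G < G'" using GA A2 G'2 by linarith
    have S0: "0 < S" "S < 1" using T0 GG' G0 by (simp_all add: S_def T_def field_simps)
    have l1S: "ln (1+S) = ln 2 + ln G' - ln T"
    proof -
      have "1 + S = 2 * G' / T" using T0 by (simp add: S_def T_def field_simps)
      then show ?thesis using T0 G0 by (simp add: ln_div ln_mult)
    qed
    have l2S: "ln (1-S) = ln 2 + ln G - ln T"
    proof -
      have "1 - S = 2 * G / T" using T0 by (simp add: S_def T_def field_simps)
      then show ?thesis using T0 G0 by (simp add: ln_div ln_mult)
    qed
    define c where "c = (1+S)/2"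
    define d where "d = - ((1-S)/2)"
    define a0 where "a0 = S - 1 + c * (ln T - ln G') + d * (ln T - ln G)"
    have teq: "S - (1 - 2 * x i) + (1+S)/2 * (ln (1+(1 - 2 * x i)) - ln (1+S)) - (1-S)/2 * (ln (1-(1 - 2 * x i)) - ln (1-S))
        = a0 + 2 * x i + c * ln (1 - x i) + d * ln (x i)" if "i \<in> I" for i
    proof -
      have f1: "ln (1+(1 - 2 * x i)) = ln 2 + ln (1 - x i)"
      proof -
        have eq: "1+(1 - 2 * x i) = 2 * (1 - x i)" by simp
        have "ln (2 * (1 - x i)) = ln 2 + ln (1 - x i)" using x2[OF that] by (intro ln_mult_pos) auto
        then show ?thesis by (subst eq)
      qed
      have f2: "ln (1-(1 - 2 * x i)) = ln 2 + ln (x i)"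
      proof -
        have eq: "1-(1 - 2 * x i) = 2 * x i" by simp
        have "ln (2 * x i) = ln 2 + ln (x i)" using x0[OF that] by (intro ln_mult_pos) auto
        then show ?thesis by (subst eq)
      qed
      show ?thesis unfolding f1 f2 l1S l2S a0_def c_def d_def by (simp add: field_simps)
    qed
    have pt: "0 \<le> a0 + 2 * x i + c * ln (1 - x i) + d * ln (x i)" if "i \<in> I" for i
    proof (cases "1 - 2 * x i = S")
      case True
      have "a0 + 2 * x i + c * ln (1 - x i) + d * ln (x i) = 0" using teq[OF that] unfolding True by simp
      then show ?thesis by simp
    next
      case False
      show ?thesis using alzer_pt[of S "1 - 2 * x i"] S0 x0[OF that] x2[OF that] False teq[OF that] by auto
    qed
    obtain k where k: "k \<in> I" "x k \<noteq> (1 - S)/2" using notall by blast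
    have ptk: "0 < a0 + 2 * x k + c * ln (1 - x k) + d * ln (x k)"
      using alzer_pt[of S "1 - 2 * x k"] S0 x0[OF k(1)] x2[OF k(1)] k(2) teq[OF k(1)] by auto
    have "(\<Sum>i\<in>I. (0::real)) < (\<Sum>i\<in>I. a0 + 2 * x i + c * ln (1 - x i) + d * ln (x i))"
      by (rule sum_strict_mono_ex1) (use fin pt ptk k in auto)
    also have "\<dots> = N * a0 + 2 * SX + c * SL' + d * SL" by (subst sum_lin[OF fin]) (simp add: cI N_def SX_def SL_def SL'_def)
    also have "\<dots> = N * (S - 1 + 2 * A + S * ln T)" unfolding SXA SLG a0_def c_def d_def
      by (simp add: field_simps)
    finally have "0 < S - 1 + 2 * A + S * ln T" using N0 by (simp add: zero_less_mult_iff)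
    moreover have "S * ln T \<le> S * (T - 1)" using S0 T0 by (intro mult_left_mono ln_le_minus_one) auto
    moreover have "S * T = G' - G" using T0 by (simp add: S_def)
    ultimately show ?thesis using A'def by (simp add: algebra_simps)
  qed
  show ?thesis using G0 GA A2 A'def G'2 G'A' KF AL by (simp add: A_def A'_def G_def G'_def)
qed

theorem theorem4p1:
  fixes n :: nat and x :: "nat \<Rightarrow> real"
  assumes "n \<ge> 1"
    and "\<And>i. i \<in> {1..n} \<Longrightarrow> 0 < x i \<and> x i \<le> 1/2"
    and "\<exists>i\<in>{1..n}. \<exists>j\<in>{1..n}. x i \<noteq> x j"
  shows
   "let A = AM n x; G = GM n x; A' = AM' n x; G' = GM' n x;
        r = ln (A' / G') / ln (A / G);
        L = ln (sqrt ((A' * G') / (A * G)))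
    in A' / G' < (A / G) powr ((A' - G') / (A - G) - r * L)
     \<and> (A / G) powr ((A' - G') / (A - G) - r * L)
         < (A / G) powr ((A' - G') / (A - G) - r * ln (A' / A))
     \<and> (A / G) powr ((A' - G') / (A - G) - r * ln (A' / A))
         < (A / G) powr (1 - r * ln (A' / A))
     \<and> (A / G) powr (1 - r * ln (A' / A)) < A / G
     \<and> A' / G' < max ((A' / G') powr (1 + L)) ((A' / G') powr ((A - G) / (A' - G')))
     \<and> max ((A' / G') powr (1 + L)) ((A' / G') powr ((A - G) / (A' - G')))
         < (A' / G') powr ((1 + L) * ((A - G) / (A' - G')))
     \<and> (A' / G') powr ((1 + L) * ((A - G) / (A' - G'))) < A / G
     \<and> (A' ^ n - G' ^ n) / (A ^ n - G ^ n)
         < (A' ^ n * G' ^ n * ln (A' / G')) / (A ^ n * G ^ n * ln (A / G))"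
  using final_real[of "GM n x" "AM n x" "AM' n x" "GM' n x" n] core[OF assms] assms(1)
  by blast

end
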